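(* Let $w\ge1$, $T\ge2\ln2$, and suppose $\alpha_2^2\le\frac{\ln w}{4}$, $\alpha_1\sqrt w\ge\ln w$, and $\frac{\ln w}{\alpha_2}\le\frac{\sqrt w\,\alpha_1}{\beta}$. If the solution of the guided probability flow ODE satisfies $\tilde x(e^{-T})\ge-\frac{\sqrt w\,\alpha_1}{16\beta}$ (i.e. $x(0)\ge -\frac{\sqrt w\,\alpha_1}{16\beta}$), then there exists a time $s_0\in[e^{-T},1]$ with $$\tilde x(s_0)\ge\frac{\ln w}{16\alpha_2}.$$
   Context: Let $0<\alpha_1<\alpha_2$ and $\beta\ge1$. Let $p^{(1)}$ and $p^{(-1)}$ be probability densities on $\mathbb R$ supported on $[\alpha_1,\alpha_2]$ and $[-\alpha_2,-\alpha_1]$ respectively, which are $\beta$-bounded with respect to each other: $\frac1\beta\le \frac{p^{(-1)}(x_1)}{p^{(1)}(x_2)}\le\beta$ for all $x_1\in(-\alpha_2,-\alpha_1)$, $x_2\in(\alpha_1,\alpha_2)$. Let $p=\frac12p^{(1)}+\frac12p^{(-1)}$, and let $(X_0,z)$ be jointly distributed with $z$ uniform on $\{\pm1\}$ and $X_0\mid z\sim p^{(z)}$. Fix $T>0$; for $t\in[0,T]$ put $a_t=e^{t-T}$, $b_t=\sqrt{1-a_t^2}$, and $X_t=a_tX_0+\xi_t$ with $\xi_t\sim\mathcal N(0,b_t^2)$ independent of $(X_0,z)$. Let $p_t$ denote the density of $X_t$ and $p_t(\cdot\mid z=\pm1)$ the conditional density of $X_t$ given $z=\pm1$. For a guidance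 parameter $w\ge0$, the guided probability flow ODE is $x'(t)=x(t)+(w+1)\nabla\log p_t(x(t)\mid z=1)-w\nabla\log p_t(x(t))$, $t\in[0,T)$. Time is reparametrized by $s=a_t=e^{t-T}\in[e^{-T},1]$, $\tilde x(s)=x(T+\ln s)$. *)

theory Defs
  imports "HOL-Probability.Probability"
begin

definition prob_density :: "(real \<Rightarrow> real) \<Rightarrow> bool" where
  "prob_density f \<longleftrightarrow> f \<in> borel_measurable lborel \<and> (\<forall>x. 0 \<le> f x)
     \<and> (\<integral>\<^sup>+ x. ennreal (f x) \<partial>lborel) = 1"

definition sched_a :: "real \<Rightarrow> real \<Rightarrow> real" where
  "sched_a T t = exp (t - T)"

definition sched_b :: "real \<Rightarrow> real \<Rightarrow> real" where
  "sched_b T t = sqrt (1 - (sched_a T t)\<^sup>2)"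

text \<open>Density of X_t = a_t X_0 + xi_t when X_0 has density q and xi_t ~ N(0, b_t^2)
  independent of X_0 (conditional density p_t(. | z) when q = p^(z)).\<close>
definition noised_density :: "(real \<Rightarrow> real) \<Rightarrow> real \<Rightarrow> real \<Rightarrow> real \<Rightarrow> real" where
  "noised_density q T t x =
     (\<integral> y. q y * normal_density 0 (sched_b T t) (x - sched_a T t * y) \<partial>lborel)"

definition marginal_density ::
  "(real \<Rightarrow> real) \<Rightarrow> (real \<Rightarrow> real) \<Rightarrow> real \<Rightarrow> real \<Rightarrow> real \<Rightarrow> real" where
  "marginal_density p1 pm1 T t x =
     1/2 * noised_density p1 T t x + 1/2 * noised_density pm1 T t x"

definition guided_field ::
  "(real \<Rightarrow> real) \<Rightarrow> (real \<Rightarrow> real) \<Rightarrow> real \<Rightarrow> real \<Rightarrow> real \<Rightarrow> real \<Rightarrow> real" where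
  "guided_field p1 pm1 w T t x =
     x + (w + 1) * deriv (\<lambda>y. ln (noised_density p1 T t y)) x
       - w * deriv (\<lambda>y. ln (marginal_density p1 pm1 T t y)) x"

end

theory Submission
  imports Defs
begin



lemma lip_from_deriv:
  fixes f f' :: "real \<Rightarrow> real"
  assumes d: "\<And>u. (f has_real_derivative f' u) (at u)" and b: "\<And>u. \<bar>f' u\<bar> \<le> M"
  shows "\<bar>f u - f v\<bar> \<le> M * \<bar>u - v\<bar>"
proof -
  have *: "\<bar>f q - f p\<bar> \<le> M * \<bar>q - p\<bar>" if "p < q" for p q
  proof -
    have "\<exists>z. p < z \<and> z < q \<and> f q - f p = (q - p) * f' z" by (rule MVT2) (use that d in auto)
    then obtain z where "f q - f p = (q - p) * f' z" by blast
    then have "\<bar>f q - f p\<bar> = \<bar>q - p\<bar> * \<bar>f' z\<bar>" by (simp add: abs_mult)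
    also have "\<dots> \<le> \<bar>q - p\<bar> * M" by (intro mult_left_mono b) auto
    finally show ?thesis by (simp add: mult.commute)
  qed
  show ?thesis
  proof (cases u v rule: linorder_cases)
    case less then show ?thesis using *[OF less] by (simp add: abs_minus_commute)
  next
    case equal then show ?thesis by simp
  next
    case greater then show ?thesis using *[OF greater] by simp
  qed
qed

lemma taylor1:
  fixes f f' :: "real \<Rightarrow> real"
  assumes d: "\<And>u. (f has_real_derivative f' u) (at u)"
    and l: "\<And>u v. \<bar>f' u - f' v\<bar> \<le> M * \<bar>u - v\<bar>"
  shows "\<bar>f (u + h) - f u - h * f' u\<bar> \<le> M * h\<^sup>2"
proof -
  have M: "0 \<le> M" using l[of 1 0] by simp
  have *: "\<bar>f q - f p - (q - p) * f' u\<bar> \<le> M * (q - p)\<^sup>2"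
    if "p < q" "u = p \<or> u = q" for p q
  proof -
    have "\<exists>z. p < z \<and> z < q \<and> f q - f p = (q - p) * f' z" by (rule MVT2) (use that d in auto)
    then obtain z where z: "p < z" "z < q" "f q - f p = (q - p) * f' z" by blast
    have "\<bar>f q - f p - (q - p) * f' u\<bar> = \<bar>q - p\<bar> * \<bar>f' z - f' u\<bar>"
      by (simp add: z(3) abs_mult[symmetric] algebra_simps)
    also have "\<dots> \<le> \<bar>q - p\<bar> * (M * \<bar>z - u\<bar>)" by (intro mult_left_mono l) auto
    also have "\<dots> \<le> \<bar>q - p\<bar> * (M * \<bar>q - p\<bar>)"
      using that z M by (intro mult_left_mono mult_left_mono) auto
    finally show ?thesis by (simp add: power2_eq_square algebra_simps)
  qed
  show ?thesis
  proof (cases h "0::real" rule: linorder_cases)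
    case less
    have "\<bar>f u - f (u + h) - (u - (u + h)) * f' u\<bar> \<le> M * (u - (u + h))\<^sup>2"
      using less by (intro *) auto
    then show ?thesis by (simp add: abs_minus_commute power2_eq_square algebra_simps)
  next
    case equal then show ?thesis by simp
  next
    case greater
    have "\<bar>f (u + h) - f u - ((u + h) - u) * f' u\<bar> \<le> M * ((u + h) - u)\<^sup>2"
      using greater by (intro *) auto
    then show ?thesis by simp
  qed
qed

lemma deriv_under_int:
  fixes q \<phi> \<phi>' :: "real \<Rightarrow> real"
  assumes q: "integrable lborel q"
    and d: "\<And>u. (\<phi> has_real_derivative \<phi>' u) (at u)"
    and l: "\<And>u v. \<bar>\<phi>' u - \<phi>' v\<bar> \<le> M * \<bar>u - v\<bar>"
    and b0: "\<And>u. \<bar>\<phi> u\<bar> \<le> B0" and b1: "\<And>u. \<bar>\<phi>' u\<bar> \<le> B1"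
    and m0[measurable]: "\<phi> \<in> borel_measurable borel" and m1[measurable]: "\<phi>' \<in> borel_measurable borel"
  shows "((\<lambda>x. \<integral>y. q y * \<phi> (x - a*y) \<partial>lborel) has_real_derivative
           (\<integral>y. q y * \<phi>' (x - a*y) \<partial>lborel)) (at x)"
proof -
  have [measurable]: "q \<in> borel_measurable lborel" using q by auto
  have b0': "\<bar>\<phi> u\<bar> \<le> \<bar>B0\<bar>" for u using b0[of u] by linarith
  have b1': "\<bar>\<phi>' u\<bar> \<le> \<bar>B1\<bar>" for u using b1[of u] by linarith
  have i0: "integrable lborel (\<lambda>y. q y * \<phi> (z - a*y))" for z
  proof (rule Bochner_Integration.integrable_bound[where f="\<lambda>y. B0 * q y"])
    show "integrable lborel (\<lambda>y. B0 * q y)" using q by simp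
    show "AE y in lborel. norm (q y * \<phi> (z - a*y)) \<le> norm (B0 * q y)"
    proof (rule AE_I2)
      fix y
      have "\<bar>q y\<bar> * \<bar>\<phi> (z - a*y)\<bar> \<le> \<bar>q y\<bar> * \<bar>B0\<bar>" by (rule mult_left_mono[OF b0']) simp
      then show "norm (q y * \<phi> (z - a*y)) \<le> norm (B0 * q y)" by (simp add: abs_mult mult.commute)
    qed
  qed measurable
  have i1: "integrable lborel (\<lambda>y. q y * \<phi>' (z - a*y))" for z
  proof (rule Bochner_Integration.integrable_bound[where f="\<lambda>y. B1 * q y"])
    show "integrable lborel (\<lambda>y. B1 * q y)" using q by simp
    show "AE y in lborel. norm (q y * \<phi>' (z - a*y)) \<le> norm (B1 * q y)"
    proof (rule AE_I2)
      fix y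
      have "\<bar>q y\<bar> * \<bar>\<phi>' (z - a*y)\<bar> \<le> \<bar>q y\<bar> * \<bar>B1\<bar>" by (rule mult_left_mono[OF b1']) simp
      then show "norm (q y * \<phi>' (z - a*y)) \<le> norm (B1 * q y)" by (simp add: abs_mult mult.commute)
    qed
  qed measurable
  define N where "N z = (\<integral>y. q y * \<phi> (z - a*y) \<partial>lborel)" for z
  define D where "D = (\<integral>y. q y * \<phi>' (x - a*y) \<partial>lborel)"
  define C where "C = M * (\<integral>y. \<bar>q y\<bar> \<partial>lborel)"
  have key: "\<bar>N (x + h) - N x - h * D\<bar> \<le> C * h\<^sup>2" for h
  proof -
    have "N (x + h) - N x - h * D =
       (\<integral>y. q y * (\<phi> ((x - a*y) + h) - \<phi> (x - a*y) - h * \<phi>' (x - a*y)) \<partial>lborel)"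
    proof -
      have e: "(\<lambda>y. q y * (\<phi> ((x - a*y) + h) - \<phi> (x - a*y) - h * \<phi>' (x - a*y))) =
        (\<lambda>y. (q y * \<phi> ((x + h) - a*y) - q y * \<phi> (x - a*y)) - h * (q y * \<phi>' (x - a*y)))"
        by (rule ext) (simp add: algebra_simps)
      show ?thesis unfolding e N_def D_def
        using i0[of "x+h"] i0[of x] i1[of x] by (simp add: integral_diff)
    qed
    also have "\<bar>\<dots>\<bar> \<le> (\<integral>y. M * h\<^sup>2 * \<bar>q y\<bar> \<partial>lborel)"
    proof (rule integral_abs_bound_integral)
      show "integrable lborel (\<lambda>y. q y * (\<phi> ((x - a*y) + h) - \<phi> (x - a*y) - h * \<phi>' (x - a*y)))"
        using i0[of "x+h"] i0[of x] i1[of x]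
        by (simp add: algebra_simps)
      show "integrable lborel (\<lambda>y. M * h\<^sup>2 * \<bar>q y\<bar>)" using q by auto
      fix y
      have "\<bar>q y * (\<phi> ((x - a*y) + h) - \<phi> (x - a*y) - h * \<phi>' (x - a*y))\<bar>
          = \<bar>q y\<bar> * \<bar>\<phi> ((x - a*y) + h) - \<phi> (x - a*y) - h * \<phi>' (x - a*y)\<bar>" by (simp add: abs_mult)
      also have "\<dots> \<le> \<bar>q y\<bar> * (M * h\<^sup>2)" by (intro mult_left_mono taylor1[OF d l]) auto
      finally show "\<bar>q y * (\<phi> ((x - a*y) + h) - \<phi> (x - a*y) - h * \<phi>' (x - a*y))\<bar> \<le> M * h\<^sup>2 * \<bar>q y\<bar>"
        by (simp add: mult.commute)
    qed
    also have "\<dots> = C * h\<^sup>2" unfolding C_def by simp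
    finally show ?thesis .
  qed
  have "((\<lambda>y. (N y - N x) / (y - x) - D) \<longlongrightarrow> 0) (at x)"
  proof (rule Lim_null_comparison)
    show "\<forall>\<^sub>F y in at x. norm ((N y - N x) / (y - x) - D) \<le> C * \<bar>y - x\<bar>"
    proof -
     have ev: "\<forall>\<^sub>F y in at x. y \<noteq> x" by (simp add: eventually_at_filter)
     show ?thesis
     proof (rule eventually_mono[OF ev])
      fix y assume "y \<noteq> x"
      then have ne: "y - x \<noteq> 0" by simp
      have "(N y - N x) / (y - x) - D = (N (x + (y - x)) - N x - (y - x) * D) / (y - x)"
        using ne by (simp add: field_simps)
      also have "\<bar>\<dots>\<bar> \<le> C * (y - x)\<^sup>2 / \<bar>y - x\<bar>"
        unfolding abs_divide using ne key[of "y - x"] by (intro divide_right_mono) auto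
      also have "\<dots> = C * \<bar>y - x\<bar>"
      proof -
        have e: "(y - x)\<^sup>2 = \<bar>y - x\<bar> * \<bar>y - x\<bar>" by (simp add: power2_eq_square)
        have d: "\<bar>y - x\<bar> \<noteq> 0" using ne by simp
        show ?thesis unfolding e by (simp only: mult.assoc[symmetric]) (rule nonzero_mult_div_cancel_right[OF d])
      qed
      finally show "norm ((N y - N x) / (y - x) - D) \<le> C * \<bar>y - x\<bar>" by simp
     qed
    qed
    show "((\<lambda>y. C * \<bar>y - x\<bar>) \<longlongrightarrow> 0) (at x)"
      by (rule tendsto_eq_intros refl)+ auto
  qed
  then have "((\<lambda>y. (N y - N x) / (y - x)) \<longlongrightarrow> D) (at x)"
    by (rule LIM_zero_cancel)
  then show ?thesis unfolding has_field_derivative_iff N_def D_def .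
qed




lemma z_exp_bound: fixes z :: real assumes "0 \<le> z" shows "z * exp (- z / 2) \<le> 2"
proof -
  have "1 + z/2 \<le> exp (z/2)" by (rule exp_ge_add_one_self)
  moreover have "z * exp (- z / 2) = z / exp (z/2)" by (simp add: exp_minus field_simps)
  moreover have "z / exp (z/2) \<le> z / (1 + z/2)" using assms calculation(1)
    by (intro divide_left_mono) auto
  moreover have "z / (1 + z/2) \<le> 2" using assms by (simp add: field_simps)
  ultimately show ?thesis by linarith
qed

lemma sq_exp_bound: fixes u vv :: real assumes "0 < vv" shows "u\<^sup>2 * exp (- u\<^sup>2 / (2* vv)) \<le> 2 * vv"
proof -
  have h: "(u\<^sup>2/vv) * exp (- (u\<^sup>2/vv) / 2) \<le> 2" by (rule z_exp_bound) (use assms in simp)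
  have e: "- (u\<^sup>2/vv) / 2 = - u\<^sup>2 / (2* vv)" by simp
  have h2: "(u\<^sup>2/vv) * exp (- u\<^sup>2 / (2* vv)) \<le> 2" using h unfolding e .
  have "vv * ((u\<^sup>2/vv) * exp (- u\<^sup>2 / (2* vv))) \<le> vv * 2" using h2 assms by (intro mult_left_mono) auto
  moreover have "vv * ((u\<^sup>2/vv) * exp (- u\<^sup>2 / (2* vv))) = u\<^sup>2 * exp (- u\<^sup>2 / (2* vv))" using assms by simp
  ultimately show ?thesis by simp
qed

lemma nd_eq: "normal_density 0 \<sigma> u = 1 / sqrt (2 * pi * \<sigma>\<^sup>2) * exp (- u\<^sup>2 / (2 * \<sigma>\<^sup>2))"
  by (simp add: normal_density_def)

lemma nd_deriv: assumes "0 < \<sigma>" shows "(normal_density 0 \<sigma> has_real_derivative (- (u / \<sigma>\<^sup>2) * normal_density 0 \<sigma> u)) (at u)"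
proof -
  define C where "C = 1 / sqrt (2 * pi * \<sigma>\<^sup>2)"
  have h1: "((\<lambda>u. u\<^sup>2) has_real_derivative 2*u) (at u)" using DERIV_pow[of 2 u] by simp
  have h2: "((\<lambda>u. - u\<^sup>2 / (2 * \<sigma>\<^sup>2)) has_real_derivative - (2*u) / (2 * \<sigma>\<^sup>2)) (at u)"
    using DERIV_cdivide[OF DERIV_minus[OF h1], of "2 * \<sigma>\<^sup>2"] by simp
  have h3: "((\<lambda>u. C * exp (- u\<^sup>2 / (2 * \<sigma>\<^sup>2))) has_real_derivative
      C * (exp (- u\<^sup>2 / (2 * \<sigma>\<^sup>2)) * (- (2*u) / (2 * \<sigma>\<^sup>2)))) (at u)"
    by (intro DERIV_cmult DERIV_chain2[OF DERIV_exp h2])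
  have e: "- (2*u) / (2 * \<sigma>\<^sup>2) = - (u / \<sigma>\<^sup>2)" by simp
  have "(normal_density 0 \<sigma> has_real_derivative C * (exp (- u\<^sup>2 / (2 * \<sigma>\<^sup>2)) * (- (u / \<sigma>\<^sup>2)))) (at u)"
    using h3 unfolding e nd_eq[abs_def] C_def .
  then show ?thesis unfolding nd_eq C_def by (simp add: mult_ac)
qed
lemma nd'_deriv: assumes "0 < \<sigma>" shows "((\<lambda>u. - (u / \<sigma>\<^sup>2) * normal_density 0 \<sigma> u) has_real_derivative
   ((u\<^sup>2 / \<sigma>\<^sup>2 - 1) / \<sigma>\<^sup>2 * normal_density 0 \<sigma> u)) (at u)"
proof -
  have h1: "((\<lambda>u. - (u / \<sigma>\<^sup>2)) has_real_derivative - (1 / \<sigma>\<^sup>2)) (at u)"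
    using DERIV_minus[OF DERIV_cdivide[OF DERIV_ident, of "\<sigma>\<^sup>2"]] by simp
  have "((\<lambda>u. - (u / \<sigma>\<^sup>2) * normal_density 0 \<sigma> u) has_real_derivative
     - (1 / \<sigma>\<^sup>2) * normal_density 0 \<sigma> u + (- (u / \<sigma>\<^sup>2) * normal_density 0 \<sigma> u) * - (u / \<sigma>\<^sup>2)) (at u)"
    by (rule DERIV_mult[OF h1 nd_deriv[OF assms]])
  moreover have "- (1 / \<sigma>\<^sup>2) * normal_density 0 \<sigma> u + (- (u / \<sigma>\<^sup>2) * normal_density 0 \<sigma> u) * - (u / \<sigma>\<^sup>2)
      = (u\<^sup>2 / \<sigma>\<^sup>2 - 1) / \<sigma>\<^sup>2 * normal_density 0 \<sigma> u"
    using assms by (simp add: field_simps power2_eq_square)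
  ultimately show ?thesis by simp
qed

lemma nd_bound: assumes "0 < \<sigma>" shows "\<bar>normal_density 0 \<sigma> u\<bar> \<le> 1 / sqrt (2 * pi * \<sigma>\<^sup>2)"
proof -
  have "- u\<^sup>2 / (2 * \<sigma>\<^sup>2) \<le> 0" by (simp add: divide_nonpos_pos)
  then have "exp (- u\<^sup>2 / (2 * \<sigma>\<^sup>2)) \<le> 1" by simp
  then have "1 / sqrt (2 * pi * \<sigma>\<^sup>2) * exp (- u\<^sup>2 / (2 * \<sigma>\<^sup>2)) \<le> 1 / sqrt (2 * pi * \<sigma>\<^sup>2) * 1"
    by (intro mult_left_mono) auto
  then show ?thesis unfolding nd_eq by simp
qed

lemma nd'_bound: assumes "0 < \<sigma>"
  shows "\<bar>- (u / \<sigma>\<^sup>2) * normal_density 0 \<sigma> u\<bar> \<le> (1 / sqrt (2 * pi * \<sigma>\<^sup>2)) * (1 + 2 * \<sigma>\<^sup>2) / \<sigma>\<^sup>2"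
proof -
  define c where "c = 1 / sqrt (2 * pi * \<sigma>\<^sup>2)"
  define E where "E = exp (- u\<^sup>2 / (2 * \<sigma>\<^sup>2))"
  have nde: "normal_density 0 \<sigma> u = c * E" unfolding nd_eq c_def E_def ..
  have c: "0 \<le> c" unfolding c_def by simp
  have E: "0 \<le> E" "E \<le> 1" unfolding E_def by (auto simp: divide_nonpos_pos)
  have s: "0 < \<sigma>\<^sup>2" using assms by simp
  have sq: "u\<^sup>2 * E \<le> 2 * \<sigma>\<^sup>2" unfolding E_def by (rule sq_exp_bound) (use assms in simp)
  have au: "\<bar>u\<bar> \<le> 1 + u\<^sup>2"
  proof (cases "\<bar>u\<bar> \<le> 1")
    case True then show ?thesis by (simp add: add_increasing2)
  next
    case False
    then have "\<bar>u\<bar> * 1 \<le> \<bar>u\<bar> * \<bar>u\<bar>" by (intro mult_left_mono) auto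
    also have "\<bar>u\<bar> * \<bar>u\<bar> = u\<^sup>2" by (simp add: power2_eq_square)
    finally show ?thesis by simp
  qed
  have "\<bar>u\<bar> * E \<le> (1 + u\<^sup>2) * E" using au E by (intro mult_right_mono) auto
  also have "\<dots> = E + u\<^sup>2 * E" by (simp add: algebra_simps)
  also have "\<dots> \<le> 1 + 2 * \<sigma>\<^sup>2" using sq E by linarith
  finally have "\<bar>u\<bar> * E \<le> 1 + 2 * \<sigma>\<^sup>2" .
  then have "c * (\<bar>u\<bar> * E) \<le> c * (1 + 2 * \<sigma>\<^sup>2)" using c by (rule mult_left_mono)
  then have "c * (\<bar>u\<bar> * E) / \<sigma>\<^sup>2 \<le> c * (1 + 2 * \<sigma>\<^sup>2) / \<sigma>\<^sup>2" using s by (intro divide_right_mono) auto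
  moreover have "\<bar>- (u / \<sigma>\<^sup>2) * normal_density 0 \<sigma> u\<bar> = c * (\<bar>u\<bar> * E) / \<sigma>\<^sup>2"
  proof -
    have "\<bar>- (u / \<sigma>\<^sup>2) * (c * E)\<bar> = \<bar>u\<bar> / \<sigma>\<^sup>2 * (c * E)"
      using c E s by (simp add: abs_mult abs_divide)
    then show ?thesis unfolding nde by (simp add: mult_ac)
  qed
  ultimately show ?thesis unfolding c_def by simp
qed

lemma nd''_bound: assumes "0 < \<sigma>"
  shows "\<bar>(u\<^sup>2 / \<sigma>\<^sup>2 - 1) / \<sigma>\<^sup>2 * normal_density 0 \<sigma> u\<bar> \<le> (1 / sqrt (2 * pi * \<sigma>\<^sup>2)) * 3 / \<sigma>\<^sup>2"
proof -
  define c where "c = 1 / sqrt (2 * pi * \<sigma>\<^sup>2)"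
  define E where "E = exp (- u\<^sup>2 / (2 * \<sigma>\<^sup>2))"
  define A where "A = u\<^sup>2 / \<sigma>\<^sup>2"
  have nde: "normal_density 0 \<sigma> u = c * E" unfolding nd_eq c_def E_def ..
  have c: "0 \<le> c" unfolding c_def by simp
  have E: "0 \<le> E" "E \<le> 1" unfolding E_def by (auto simp: divide_nonpos_pos)
  have sq: "u\<^sup>2 * E \<le> 2 * \<sigma>\<^sup>2" unfolding E_def by (rule sq_exp_bound) (use assms in simp)
  have s: "0 < \<sigma>\<^sup>2" using assms by simp
  have A0: "0 \<le> A" unfolding A_def by simp
  have "\<bar>A - 1\<bar> \<le> A + 1" using A0 by (simp add: abs_le_iff)
  then have "\<bar>A - 1\<bar> * E \<le> (A + 1) * E" using E by (intro mult_right_mono) auto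
  also have "\<dots> = u\<^sup>2 * E / \<sigma>\<^sup>2 + E" unfolding A_def by (simp add: algebra_simps)
  also have "\<dots> \<le> 2 * \<sigma>\<^sup>2 / \<sigma>\<^sup>2 + 1" using sq E s by (intro add_mono divide_right_mono) auto
  also have "\<dots> = 3" using s by simp
  finally have "\<bar>A - 1\<bar> * E \<le> 3" .
  then have "c * (\<bar>A - 1\<bar> * E) \<le> c * 3" using c by (rule mult_left_mono)
  then have "c * (\<bar>A - 1\<bar> * E) / \<sigma>\<^sup>2 \<le> c * 3 / \<sigma>\<^sup>2" using s by (intro divide_right_mono) auto
  moreover have "\<bar>(A - 1) / \<sigma>\<^sup>2 * (c * E)\<bar> = c * (\<bar>A - 1\<bar> * E) / \<sigma>\<^sup>2"
    using c E s by (simp add: abs_mult abs_divide)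
  ultimately show ?thesis unfolding c_def nde A_def by simp
qed

lemma noised_deriv:
  assumes q: "integrable lborel q" and s: "0 < \<sigma>"
  shows "((\<lambda>x. \<integral>y. q y * normal_density 0 \<sigma> (x - a*y) \<partial>lborel) has_real_derivative
           (\<integral>y. q y * (- ((x - a*y) / \<sigma>\<^sup>2) * normal_density 0 \<sigma> (x - a*y)) \<partial>lborel)) (at x)"
proof (rule deriv_under_int[OF q nd_deriv[OF s]])
  show "\<bar>- (u / \<sigma>\<^sup>2) * normal_density 0 \<sigma> u - - (v / \<sigma>\<^sup>2) * normal_density 0 \<sigma> v\<bar>
        \<le> (1 / sqrt (2 * pi * \<sigma>\<^sup>2)) * 3 / \<sigma>\<^sup>2 * \<bar>u - v\<bar>" for u v
    by (rule lip_from_deriv[OF nd'_deriv[OF s] nd''_bound[OF s]])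
  show "\<bar>normal_density 0 \<sigma> u\<bar> \<le> 1 / sqrt (2 * pi * \<sigma>\<^sup>2)" for u by (rule nd_bound[OF s])
  show "\<bar>- (u / \<sigma>\<^sup>2) * normal_density 0 \<sigma> u\<bar> \<le> (1 / sqrt (2 * pi * \<sigma>\<^sup>2)) * (1 + 2 * \<sigma>\<^sup>2) / \<sigma>\<^sup>2" for u
    by (rule nd'_bound[OF s])
  show "normal_density 0 \<sigma> \<in> borel_measurable borel" by measurable
  show "(\<lambda>u. - (u / \<sigma>\<^sup>2) * normal_density 0 \<sigma> u) \<in> borel_measurable borel" by measurable
qed




lemma pd_int:
  assumes "prob_density p"
  shows "integrable lborel p" "(\<integral>y. p y \<partial>lborel) = 1" "\<And>y. 0 \<le> p y"
    "p \<in> borel_measurable lborel"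
proof -
  have m: "p \<in> borel_measurable lborel" and nn: "\<And>y. 0 \<le> p y"
    and one: "(\<integral>\<^sup>+ x. ennreal (p x) \<partial>lborel) = 1"
    using assms unfolding prob_density_def by auto
  show "integrable lborel p" using m nn one by (intro integrableI_nonneg) auto
  show "(\<integral>y. p y \<partial>lborel) = 1" using m nn one by (subst integral_eq_nn_integral) auto
  show "\<And>y. 0 \<le> p y" by (rule nn)
  show "p \<in> borel_measurable lborel" by (rule m)
qed

lemma integrable_q_bounded:
  fixes q f :: "real \<Rightarrow> real"
  assumes q: "integrable lborel q" and f[measurable]: "f \<in> borel_measurable lborel"
    and b: "\<And>y. \<bar>f y\<bar> \<le> B"
  shows "integrable lborel (\<lambda>y. q y * f y)"
proof (rule Bochner_Integration.integrable_bound[where f="\<lambda>y. B * q y"])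
  show "integrable lborel (\<lambda>y. B * q y)" using q by simp
  show "AE y in lborel. norm (q y * f y) \<le> norm (B * q y)"
  proof (rule AE_I2)
    fix y
    have B: "\<bar>f y\<bar> \<le> \<bar>B\<bar>" using b[of y] by linarith
    have "\<bar>q y\<bar> * \<bar>f y\<bar> \<le> \<bar>q y\<bar> * \<bar>B\<bar>" by (rule mult_left_mono[OF B]) simp
    then show "norm (q y * f y) \<le> norm (B * q y)" by (simp add: abs_mult mult.commute)
  qed
  show "(\<lambda>y. q y * f y) \<in> borel_measurable lborel" using q by measurable
qed

lemma int_mono_supp:
  fixes q f g :: "real \<Rightarrow> real"
  assumes "\<And>y. 0 \<le> q y" "integrable lborel (\<lambda>y. q y * f y)" "integrable lborel (\<lambda>y. q y * g y)"
    "\<And>y. q y \<noteq> 0 \<Longrightarrow> f y \<le> g y"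
  shows "(\<integral>y. q y * f y \<partial>lborel) \<le> (\<integral>y. q y * g y \<partial>lborel)"
proof (rule integral_mono[OF assms(2,3)])
  fix y show "q y * f y \<le> q y * g y"
    using assms(1,4)[of y] by (cases "q y = 0") (auto intro: mult_left_mono)
qed

lemma int_const_supp:
  fixes q :: "real \<Rightarrow> real"
  assumes "integrable lborel q" "(\<integral>y. q y \<partial>lborel) = 1"
  shows "(\<integral>y. q y * K \<partial>lborel) = K"
  using assms by simp




lemma nd_mono:
  assumes "0 < \<sigma>" "u\<^sup>2 \<le> u'\<^sup>2"
  shows "normal_density 0 \<sigma> u' \<le> normal_density 0 \<sigma> u"
  unfolding nd_eq using assms
  by (intro mult_left_mono) (auto intro!: divide_right_mono)

lemma int_nd_meas[measurable]: "(\<lambda>u. normal_density 0 \<sigma> (z - a * u)) \<in> borel_measurable lborel"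
  by measurable

lemma integrable_nd:
  assumes "integrable lborel q" "0 < \<sigma>"
  shows "integrable lborel (\<lambda>u. q u * normal_density 0 \<sigma> (z - a*u))"
  by (rule integrable_q_bounded[OF assms(1) int_nd_meas nd_bound[OF assms(2)]])

lemma pos_N:
  assumes pd: "prob_density q" and supp: "\<And>y. q y \<noteq> 0 \<Longrightarrow> \<bar>y\<bar> \<le> R"
    and s: "0 < \<sigma>" and a: "0 \<le> a" "a \<le> 1"
  shows "0 < (\<integral>u. q u * normal_density 0 \<sigma> (z - a*u) \<partial>lborel)"
proof -
  note qi = pd_int[OF pd]
  define K0 where "K0 = normal_density 0 \<sigma> (\<bar>z\<bar> + R)"
  have K0: "0 < K0" unfolding K0_def using s by (rule normal_density_pos)
  have "(\<integral>u. q u * K0 \<partial>lborel) \<le> (\<integral>u. q u * normal_density 0 \<sigma> (z - a*u) \<partial>lborel)"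
  proof (rule int_mono_supp[OF qi(3)])
    show "integrable lborel (\<lambda>u. q u * K0)" using qi by simp
    show "integrable lborel (\<lambda>u. q u * normal_density 0 \<sigma> (z - a*u))" by (rule integrable_nd[OF qi(1) s])
    fix y assume "q y \<noteq> 0"
    then have y: "\<bar>y\<bar> \<le> R" by (rule supp)
    have "\<bar>a * y\<bar> \<le> 1 * R" unfolding abs_mult using a y by (intro mult_mono) auto
    then have "\<bar>z - a*y\<bar> \<le> \<bar>\<bar>z\<bar> + R\<bar>" by linarith
    then have "(z - a*y)\<^sup>2 \<le> (\<bar>z\<bar> + R)\<^sup>2" by (simp add: abs_le_square_iff)
    then show "K0 \<le> normal_density 0 \<sigma> (z - a*y)" unfolding K0_def by (rule nd_mono[OF s])
  qed
  also have "(\<integral>u. q u * K0 \<partial>lborel) = K0" using qi by simp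
  finally show ?thesis using K0 by linarith
qed

lemma pair_bound:
  fixes a y y' z L \<alpha>1 \<alpha>2 :: real
  assumes "0 < a" "0 < \<alpha>1" "\<alpha>1 \<le> y" "y \<le> \<alpha>2" "-\<alpha>2 \<le> y'" "y' \<le> -\<alpha>1" "z \<le> L" "0 \<le> L"
  shows "(z - a*y')\<^sup>2 - (z - a*y)\<^sup>2 \<le> a * (2*\<alpha>2) * (2*L + a*\<alpha>2)"
proof -
  have e: "(z - a*y')\<^sup>2 - (z - a*y)\<^sup>2 = a * (y - y') * (2*z - a*(y + y'))"
    by (simp add: power2_eq_square algebra_simps)
  show ?thesis
  proof (cases "2*z - a*(y + y') \<le> 0")
    case True
    have "0 \<le> a * (y - y')" using assms by simp
    then have "a * (y - y') * (2*z - a*(y + y')) \<le> 0" using True by (simp add: mult_nonneg_nonpos)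
    moreover have "0 \<le> a * (2*\<alpha>2) * (2*L + a*\<alpha>2)" using assms by simp
    ultimately show ?thesis using e by linarith
  next
    case False
    have "- (y + y') \<le> \<alpha>2" using assms by linarith
    then have "a * (- (y + y')) \<le> a * \<alpha>2" using assms by (intro mult_left_mono) auto
    then have s: "2*z - a*(y + y') \<le> 2*L + a*\<alpha>2" using assms by (simp add: algebra_simps)
    have "a * (y - y') \<le> a * (2*\<alpha>2)" using assms by (intro mult_left_mono) auto
    then have "a * (y - y') * (2*z - a*(y + y')) \<le> a * (2*\<alpha>2) * (2*L + a*\<alpha>2)"
      using s False assms by (intro mult_mono) auto
    then show ?thesis using e by linarith
  qed
qed




lemma nd_ratio:
  assumes s: "0 < \<sigma>" and h: "u'\<^sup>2 \<le> u\<^sup>2 + 2 * \<sigma>\<^sup>2 * k"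
  shows "exp (- k) * normal_density 0 \<sigma> u \<le> normal_density 0 \<sigma> u'"
proof -
  have s2: "0 < 2 * \<sigma>\<^sup>2" using s by simp
  have "u'\<^sup>2 / (2 * \<sigma>\<^sup>2) \<le> (u\<^sup>2 + 2 * \<sigma>\<^sup>2 * k) / (2 * \<sigma>\<^sup>2)"
    using h s2 by (intro divide_right_mono) auto
  also have "\<dots> = u\<^sup>2 / (2 * \<sigma>\<^sup>2) + k" using s2 by (simp add: field_simps)
  finally have "- k + - u\<^sup>2 / (2 * \<sigma>\<^sup>2) \<le> - u'\<^sup>2 / (2 * \<sigma>\<^sup>2)" by simp
  then have "exp (- k + - u\<^sup>2 / (2 * \<sigma>\<^sup>2)) \<le> exp (- u'\<^sup>2 / (2 * \<sigma>\<^sup>2))" by simp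
  moreover have "exp (- k) * exp (- u\<^sup>2 / (2 * \<sigma>\<^sup>2)) = exp (- k + - u\<^sup>2 / (2 * \<sigma>\<^sup>2))"
    by (simp only: exp_add)
  ultimately have "exp (- k) * exp (- u\<^sup>2 / (2 * \<sigma>\<^sup>2)) \<le> exp (- u'\<^sup>2 / (2 * \<sigma>\<^sup>2))"
    by simp
  then have "1 / sqrt (2 * pi * \<sigma>\<^sup>2) * (exp (- k) * exp (- u\<^sup>2 / (2 * \<sigma>\<^sup>2)))
     \<le> 1 / sqrt (2 * pi * \<sigma>\<^sup>2) * exp (- u'\<^sup>2 / (2 * \<sigma>\<^sup>2))"
    by (intro mult_left_mono) auto
  then show ?thesis unfolding nd_eq by (simp only: mult_ac)
qed

lemma field_bound:
  fixes p1 pm1 :: "real \<Rightarrow> real" and \<alpha>1 \<alpha>2 w T t z :: real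
  assumes pd1: "prob_density p1" and s1: "\<forall>y. y \<notin> {\<alpha>1..\<alpha>2} \<longrightarrow> p1 y = 0"
    and pdm: "prob_density pm1" and sm: "\<forall>y. y \<notin> {-\<alpha>2..-\<alpha>1} \<longrightarrow> pm1 y = 0"
    and al: "0 < \<alpha>1" "\<alpha>1 < \<alpha>2" and w: "1 \<le> w" and lw: "0 < ln w"
    and a2: "\<alpha>2\<^sup>2 \<le> ln w / 4"
    and ta: "exp (t - T) \<le> 1/2"
    and z: "z \<le> ln w / (16 * \<alpha>2)"
    and K: "0 \<le> \<alpha>1 + w * \<alpha>1 * exp (- ln w / 4) - ln w / (16 * \<alpha>2) / 2"
  shows "exp (t - T) * (\<alpha>1 + w * \<alpha>1 * exp (- ln w / 4) - ln w / (16 * \<alpha>2) / 2)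
           \<le> guided_field p1 pm1 w T t z"
proof -
  define a where "a = exp (t - T)"
  define \<sigma> where "\<sigma> = sched_b T t"
  define v where "v = \<sigma>\<^sup>2"
  define L where "L = ln w / (16 * \<alpha>2)"
  define \<rho> where "\<rho> = exp (- ln w / 4)"
  define KK where "KK = \<alpha>1 + w * \<alpha>1 * \<rho> - L / 2"
  have a0: "0 < a" and ah: "a \<le> 1/2" using ta by (auto simp: a_def)
  have aa: "a\<^sup>2 \<le> 1/4"
  proof -
    have "a * a \<le> (1/2) * (1/2)" using a0 ah by (intro mult_mono) auto
    then show ?thesis by (simp add: power2_eq_square)
  qed
  have \<sigma>: "\<sigma> = sqrt (1 - a\<^sup>2)" unfolding \<sigma>_def sched_b_def sched_a_def a_def ..
  have v: "v = 1 - a\<^sup>2" unfolding v_def \<sigma> using aa by simp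
  have v34: "3/4 \<le> v" "v \<le> 1" using aa v by auto
  have s0: "0 < \<sigma>" unfolding \<sigma> using aa by simp
  have L0: "0 < L" unfolding L_def using lw al by simp
  have \<rho>0: "0 < \<rho>" "\<rho> \<le> 1" unfolding \<rho>_def using lw by auto
  define \<phi> where "\<phi> = normal_density 0 \<sigma>"
  define NN where "NN q y = (\<integral>u. q u * \<phi> (y - a*u) \<partial>lborel)" for q :: "real \<Rightarrow> real" and y
  define DD where "DD q y = (\<integral>u. q u * (- ((y - a*u) / \<sigma>\<^sup>2) * \<phi> (y - a*u)) \<partial>lborel)"
    for q :: "real \<Rightarrow> real" and y
  have nd: "noised_density q T t = NN q" for q
    by (rule ext) (simp add: noised_density_def NN_def \<phi>_def \<sigma>_def a_def sched_a_def)
  note i1 = pd_int[OF pd1] and im = pd_int[OF pdm]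
  have hd1: "(NN p1 has_real_derivative DD p1 z) (at z)"
    unfolding NN_def DD_def \<phi>_def by (rule noised_deriv[OF i1(1) s0])
  have hdm: "(NN pm1 has_real_derivative DD pm1 z) (at z)"
    unfolding NN_def DD_def \<phi>_def by (rule noised_deriv[OF im(1) s0])
  have sup1: "\<alpha>1 \<le> y \<and> y \<le> \<alpha>2" if "p1 y \<noteq> 0" for y using s1 that by auto
  have supm: "-\<alpha>2 \<le> y \<and> y \<le> -\<alpha>1" if "pm1 y \<noteq> 0" for y using sm that by auto
  have ab1: "\<bar>y\<bar> \<le> \<alpha>2" if "p1 y \<noteq> 0" for y using sup1[OF that] al by auto
  have abm: "\<bar>y\<bar> \<le> \<alpha>2" if "pm1 y \<noteq> 0" for y using supm[OF that] al by auto
  have N1: "0 < NN p1 z" unfolding NN_def \<phi>_def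
    by (rule pos_N[OF pd1 ab1 s0]) (use a0 ah in auto)
  have Nm: "0 < NN pm1 z" unfolding NN_def \<phi>_def
    by (rule pos_N[OF pdm abm s0]) (use a0 ah in auto)
  define N1 where "N1 = NN p1 z"
  define Nm where "Nm = NN pm1 z"
  define D1 where "D1 = DD p1 z"
  define Dm where "Dm = DD pm1 z"
  define M where "M = 1/2 * N1 + 1/2 * Nm"
  have "((\<lambda>y. ln (NN p1 y)) has_real_derivative 1 / NN p1 z * DD p1 z) (at z)"
    by (rule DERIV_chain2[OF DERIV_ln_divide[OF N1] hd1])
  then have g1: "deriv (\<lambda>y. ln (noised_density p1 T t y)) z = 1 / N1 * D1"
    unfolding nd N1_def D1_def by (rule DERIV_imp_deriv)
  have mdef: "marginal_density p1 pm1 T t = (\<lambda>y. 1/2 * NN p1 y + 1/2 * NN pm1 y)"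
    by (rule ext) (simp add: marginal_density_def nd)
  have hdM: "((\<lambda>y. 1/2 * NN p1 y + 1/2 * NN pm1 y) has_real_derivative 1/2 * D1 + 1/2 * Dm) (at z)"
    unfolding D1_def Dm_def using DERIV_add[OF DERIV_cmult[OF hd1, of "1/2"] DERIV_cmult[OF hdm, of "1/2"]] by simp
  have M0: "0 < M" unfolding M_def N1_def Nm_def using N1 Nm by simp
  have "((\<lambda>y. ln (1/2 * NN p1 y + 1/2 * NN pm1 y)) has_real_derivative 1 / M * (1/2 * D1 + 1/2 * Dm)) (at z)"
    using DERIV_chain2[OF DERIV_ln_divide hdM] M0 unfolding M_def N1_def Nm_def by simp
  then have gm: "deriv (\<lambda>y. ln (marginal_density p1 pm1 T t y)) z = 1 / M * (1/2 * D1 + 1/2 * Dm)"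
    unfolding mdef by (rule DERIV_imp_deriv)
  have G: "guided_field p1 pm1 w T t z = z + (w + 1) * (1 / N1 * D1) - w * (1 / M * (1/2 * D1 + 1/2 * Dm))"
    unfolding guided_field_def g1 gm ..
  have m\<phi>[measurable]: "(\<lambda>u. \<phi> (z - a * u)) \<in> borel_measurable lborel" unfolding \<phi>_def by measurable
  have m\<phi>'[measurable]: "(\<lambda>u. - ((z - a*u) / \<sigma>\<^sup>2) * \<phi> (z - a*u)) \<in> borel_measurable lborel"
    unfolding \<phi>_def by measurable
  have int\<phi>: "integrable lborel (\<lambda>u. q u * \<phi> (z - a*u))" if "integrable lborel q" for q
    unfolding \<phi>_def by (rule integrable_nd[OF that s0])
  have int\<phi>k: "integrable lborel (\<lambda>u. q u * (k * \<phi> (z - a*u)))" if "integrable lborel q" for q k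
    using int\<phi>[OF that, THEN integrable_mult_right[of k]] by (simp add: algebra_simps)
  have int\<phi>': "integrable lborel (\<lambda>u. q u * (- ((z - a*u) / \<sigma>\<^sup>2) * \<phi> (z - a*u)))" if "integrable lborel q" for q
    unfolding \<phi>_def by (rule integrable_q_bounded[OF that _ nd'_bound[OF s0]]) (unfold \<phi>_def[symmetric], rule m\<phi>')
  have intk: "(\<integral>u. q u * (k * \<phi> (z - a*u)) \<partial>lborel) = k * NN q z" for q k
    unfolding NN_def by (simp add: algebra_simps)
  have B1: "(a*\<alpha>1 - z) / v * N1 \<le> D1"
  proof -
    have "(\<integral>u. p1 u * ((a*\<alpha>1 - z) / v * \<phi> (z - a*u)) \<partial>lborel) \<le> D1"
      unfolding D1_def DD_def
    proof (rule int_mono_supp[OF i1(3) int\<phi>k[OF i1(1)] int\<phi>'[OF i1(1)]])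
      fix u assume "p1 u \<noteq> 0"
      then have "a*\<alpha>1 \<le> a*u" using sup1 a0 by (intro mult_left_mono) auto
      then have "(a*\<alpha>1 - z) / v \<le> (a*u - z) / v" using v34 by (intro divide_right_mono) auto
      then have "(a*\<alpha>1 - z) / v \<le> - ((z - a*u) / \<sigma>\<^sup>2)"
        unfolding v_def[symmetric] by (simp add: minus_divide_left)
      then show "(a*\<alpha>1 - z) / v * \<phi> (z - a*u) \<le> - ((z - a*u) / \<sigma>\<^sup>2) * \<phi> (z - a*u)"
        by (rule mult_right_mono) (simp add: \<phi>_def)
    qed
    then show ?thesis unfolding intk N1_def .
  qed
  have B2: "Dm \<le> (- a*\<alpha>1 - z) / v * Nm"
  proof -
    have "Dm \<le> (\<integral>u. pm1 u * ((- a*\<alpha>1 - z) / v * \<phi> (z - a*u)) \<partial>lborel)"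
      unfolding Dm_def DD_def
    proof (rule int_mono_supp[OF im(3) int\<phi>'[OF im(1)] int\<phi>k[OF im(1)]])
      fix u assume "pm1 u \<noteq> 0"
      then have "a*u \<le> a*(-\<alpha>1)" using supm a0 by (intro mult_left_mono) auto
      then have "(a*u - z) / v \<le> (a*(-\<alpha>1) - z) / v" using v34 by (intro divide_right_mono) auto
      then have "- ((z - a*u) / \<sigma>\<^sup>2) \<le> (- a*\<alpha>1 - z) / v"
        unfolding v_def[symmetric] by (simp add: minus_divide_left)
      then show "- ((z - a*u) / \<sigma>\<^sup>2) * \<phi> (z - a*u) \<le> (- a*\<alpha>1 - z) / v * \<phi> (z - a*u)"
        by (rule mult_right_mono) (simp add: \<phi>_def)
    qed
    then show ?thesis unfolding intk Nm_def .
  qed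
  have pt: "\<rho> * \<phi> (z - a*y) \<le> \<phi> (z - a*y')"
    if y: "\<alpha>1 \<le> y" "y \<le> \<alpha>2" and y': "-\<alpha>2 \<le> y'" "y' \<le> -\<alpha>1" for y y'
  proof -
    have pb: "(z - a*y')\<^sup>2 - (z - a*y)\<^sup>2 \<le> a * (2*\<alpha>2) * (2*L + a*\<alpha>2)"
      by (rule pair_bound) (use a0 al y y' z L0 in \<open>auto simp: L_def\<close>)
    have e1: "a * (2*\<alpha>2) * (2*L + a*\<alpha>2) = a * ln w / 4 + 2 * a\<^sup>2 * \<alpha>2\<^sup>2"
      unfolding L_def using al by (simp add: field_simps power2_eq_square)
    have "a * ln w \<le> 1/2 * ln w" using ah lw by (intro mult_right_mono) auto
    moreover have "a\<^sup>2 * \<alpha>2\<^sup>2 \<le> 1/4 * (ln w / 4)" using aa a2 by (intro mult_mono) auto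
    ultimately have "a * ln w / 4 + 2 * a\<^sup>2 * \<alpha>2\<^sup>2 \<le> ln w / 4" by linarith
    moreover have "ln w / 4 \<le> 2 * \<sigma>\<^sup>2 * (ln w / 4)"
      using v34 lw unfolding v_def[symmetric] by simp
    ultimately have "(z - a*y')\<^sup>2 \<le> (z - a*y)\<^sup>2 + 2 * \<sigma>\<^sup>2 * (ln w / 4)" using pb e1 by linarith
    from nd_ratio[OF s0 this] show ?thesis unfolding \<rho>_def \<phi>_def by simp
  qed
  have B3: "\<rho> * N1 \<le> Nm"
  proof -
    have st1: "\<rho> * \<phi> (z - a*y) \<le> Nm" if y: "\<alpha>1 \<le> y" "y \<le> \<alpha>2" for y
    proof -
      have "(\<integral>u. pm1 u * (\<rho> * \<phi> (z - a*y)) \<partial>lborel) \<le> (\<integral>u. pm1 u * \<phi> (z - a*u) \<partial>lborel)"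
        by (rule int_mono_supp[OF im(3)]) (use im int\<phi>[OF im(1)] pt[OF y] supm in auto)
      then show ?thesis using im unfolding Nm_def NN_def by simp
    qed
    have "(\<integral>u. p1 u * \<phi> (z - a*u) \<partial>lborel) \<le> (\<integral>u. p1 u * (Nm / \<rho>) \<partial>lborel)"
    proof (rule int_mono_supp[OF i1(3) int\<phi>[OF i1(1)]])
      show "integrable lborel (\<lambda>u. p1 u * (Nm / \<rho>))" using i1 by simp
      fix u assume "p1 u \<noteq> 0"
      then have "\<rho> * \<phi> (z - a*u) \<le> Nm" using sup1 st1 by blast
      then show "\<phi> (z - a*u) \<le> Nm / \<rho>" using \<rho>0 by (simp add: field_simps)
    qed
    then have "N1 \<le> Nm / \<rho>" using i1 unfolding N1_def NN_def by simp
    then show ?thesis using \<rho>0 by (simp add: field_simps)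
  qed
  have N1p: "0 < N1" and Nmp: "0 < Nm" using N1 Nm unfolding N1_def Nm_def by auto
  define r1 where "r1 = D1 / N1"
  define rm where "rm = Dm / Nm"
  define \<theta> where "\<theta> = Nm / (N1 + Nm)"
  have r1: "(a*\<alpha>1 - z) / v \<le> r1" unfolding r1_def using B1 N1p by (simp add: pos_le_divide_eq)
  have rm: "rm \<le> (- a*\<alpha>1 - z) / v" unfolding rm_def using B2 Nmp by (simp add: pos_divide_le_eq)
  have e1: "1 / N1 * D1 = r1" unfolding r1_def by simp
  have e2a: "1 / M * (1/2 * D1 + 1/2 * Dm) = (D1 + Dm) / (N1 + Nm)"
    unfolding M_def using N1p Nmp by (simp add: field_simps)
  have d1: "r1 * N1 = D1" unfolding r1_def using N1p by simp
  have dm: "rm * Nm = Dm" unfolding rm_def using Nmp by simp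
  have "r1 - (r1 - rm) * \<theta> = (r1 * N1 + rm * Nm) / (N1 + Nm)"
    unfolding \<theta>_def using N1p Nmp by (simp add: field_simps)
  then have e2b: "(D1 + Dm) / (N1 + Nm) = r1 - (r1 - rm) * \<theta>" unfolding d1 dm by simp
  have Geq: "guided_field p1 pm1 w T t z = z + r1 + w * (r1 - rm) * \<theta>"
    unfolding G e1 e2a e2b by (simp add: algebra_simps)
  have \<theta>: "\<rho> / 2 \<le> \<theta>"
  proof -
    have "\<rho> * Nm \<le> Nm" using \<rho>0 Nmp by simp
    then have "\<rho> * (N1 + Nm) \<le> 2 * Nm" using B3 by (simp add: algebra_simps)
    then show ?thesis unfolding \<theta>_def using N1p Nmp by (simp add: field_simps)
  qed
  have v0: "0 < v" using v34 by simp
  have d: "2 * a * \<alpha>1 / v \<le> r1 - rm"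
  proof -
    have "(a*\<alpha>1 - z) / v - (- a*\<alpha>1 - z) / v = 2 * a * \<alpha>1 / v" using v0 by (simp add: field_simps)
    then show ?thesis using r1 rm by linarith
  qed
  have d0: "0 \<le> 2 * a * \<alpha>1 / v" using a0 al v0 by simp
  have "w * (2 * a * \<alpha>1 / v) * (\<rho> / 2) \<le> w * (r1 - rm) * \<theta>"
    using w d d0 \<theta> \<rho>0 by (intro mult_mono) auto
  then have t2: "a / v * (w * \<alpha>1 * \<rho>) \<le> w * (r1 - rm) * \<theta>" by (simp add: field_simps)
  have t1: "z + (a*\<alpha>1 - z) / v = a / v * (\<alpha>1 - a * z)"
  proof -
    have v1: "1 - a * a \<noteq> 0" using v0 v by (simp add: power2_eq_square)
    have "z + (a*\<alpha>1 - z) / (1 - a * a) = a / (1 - a * a) * (\<alpha>1 - a * z)"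
      using v1 by (simp add: field_simps)
    then show ?thesis unfolding v by (simp add: power2_eq_square)
  qed
  have az: "a * z \<le> L / 2"
  proof -
    have "a * z \<le> a * L" using a0 z unfolding L_def by (intro mult_left_mono) auto
    also have "\<dots> \<le> 1/2 * L" using ah L0 by (intro mult_right_mono) auto
    finally show ?thesis by simp
  qed
  have KK: "0 \<le> KK" using K unfolding KK_def \<rho>_def L_def .
  have "a / v * KK \<le> a / v * (\<alpha>1 - a * z + w * \<alpha>1 * \<rho>)"
    unfolding KK_def using az a0 v0 by (intro mult_left_mono) auto
  also have "\<dots> = (z + (a*\<alpha>1 - z) / v) + a / v * (w * \<alpha>1 * \<rho>)" unfolding t1 by (simp add: algebra_simps)
  also have "\<dots> \<le> guided_field p1 pm1 w T t z" unfolding Geq using r1 t2 by linarith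
  finally have main: "a / v * KK \<le> guided_field p1 pm1 w T t z" .
  have "a * KK \<le> a / v * KK"
  proof -
    have "a \<le> a / v" using a0 v34 v0 by (simp add: field_simps)
    then show ?thesis using KK by (rule mult_right_mono)
  qed
  then show ?thesis using main unfolding a_def KK_def \<rho>_def L_def by linarith
qed




theorem lemma3p3:
  fixes \<alpha>1 \<alpha>2 \<beta> w T :: real
    and p1 pm1 :: "real \<Rightarrow> real"
    and x :: "real \<Rightarrow> real"
  assumes "0 < \<alpha>1" and "\<alpha>1 < \<alpha>2" and "1 \<le> \<beta>"
    and "prob_density p1" and "\<forall>y. y \<notin> {\<alpha>1..\<alpha>2} \<longrightarrow> p1 y = 0"
    and "prob_density pm1" and "\<forall>y. y \<notin> {-\<alpha>2..-\<alpha>1} \<longrightarrow> pm1 y = 0"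
    and "\<forall>x1 \<in> {-\<alpha>2<..<-\<alpha>1}. \<forall>x2 \<in> {\<alpha>1<..<\<alpha>2}.
           1 / \<beta> \<le> pm1 x1 / p1 x2 \<and> pm1 x1 / p1 x2 \<le> \<beta>"
    and "1 \<le> w" and "2 * ln 2 \<le> T"
    and "\<alpha>2\<^sup>2 \<le> ln w / 4"
    and "\<alpha>1 * sqrt w \<ge> ln w"
    and "ln w / \<alpha>2 \<le> sqrt w * \<alpha>1 / \<beta>"
    and "\<forall>t \<in> {0..<T}. (x has_real_derivative guided_field p1 pm1 w T t (x t)) (at t within {0..<T})"
    and "x 0 \<ge> - (sqrt w * \<alpha>1 / (16 * \<beta>))"
  shows "\<exists>s0 \<in> {exp (-T)..1}. x (T + ln s0) \<ge> ln w / (16 * \<alpha>2)"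
proof (rule ccontr)
  assume contra: "\<not> (\<exists>s0 \<in> {exp (-T)..1}. x (T + ln s0) \<ge> ln w / (16 * \<alpha>2))"
  note A = assms
  define L where "L = ln w / (16 * \<alpha>2)"
  define \<rho> where "\<rho> = exp (- ln w / 4)"
  define S where "S = sqrt w * \<alpha>1"
  define KK where "KK = \<alpha>1 + w * \<alpha>1 * \<rho> - L / 2"
  define t1 where "t1 = T - ln 2"
  have a2p: "0 < \<alpha>2" using A(1,2) by simp
  have lw: "0 < ln w"
  proof -
    have "0 < \<alpha>2\<^sup>2" using a2p by simp
    then show ?thesis using A(11) by linarith
  qed
  have w0: "0 < w" using A(9) by simp
  have ln2: "0 < ln (2::real)" by simp
  have t10: "0 \<le> t1" "t1 < T" unfolding t1_def using A(10) ln2 by linarith+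
  have less: "x t < L" if "0 \<le> t" "t \<le> T" for t
  proof -
    have mem: "exp (t - T) \<in> {exp (-T)..1}" using that by auto
    have "\<not> (ln w / (16 * \<alpha>2) \<le> x (T + ln (exp (t - T))))" using contra mem by blast
    then show ?thesis unfolding L_def by simp
  qed
  have sw: "sqrt w = exp (ln w / 2)"
    using w0 by (simp add: powr_half_sqrt[symmetric] powr_def)
  have wrho: "sqrt w \<le> w * \<rho>"
  proof -
    have "w * \<rho> = exp (ln w) * exp (- ln w / 4)" unfolding \<rho>_def using w0 by simp
    also have "\<dots> = exp (3 * ln w / 4)" by (simp add: exp_add[symmetric])
    finally show ?thesis unfolding sw using lw by simp
  qed
  have S0: "0 < S" unfolding S_def using A(1) w0 by simp
  have Sb: "S / \<beta> \<le> S"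
  proof -
    have "1 * S \<le> \<beta> * S" using A(3) S0 by (intro mult_right_mono) auto
    then show "S / \<beta> \<le> S" using A(3) by (simp add: pos_divide_le_eq mult.commute)
  qed
  have LS: "L \<le> S / 16"
  proof -
    from Sb have "sqrt w * \<alpha>1 / \<beta> \<le> sqrt w * \<alpha>1" unfolding S_def .
    then show ?thesis using A(13) unfolding L_def S_def by (simp add: field_simps)
  qed
  have wS: "S \<le> w * \<alpha>1 * \<rho>"
    unfolding S_def using wrho A(1) by (simp add: mult.commute mult.left_commute mult_right_mono)
  have KK: "0 \<le> KK" unfolding KK_def using wS LS S0 A(1) by linarith
  have fb: "exp (t - T) * KK \<le> guided_field p1 pm1 w T t (x t)" if "0 \<le> t" "t \<le> t1" for t
    unfolding KK_def \<rho>_def L_def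
  proof (rule field_bound[OF A(4,5,6,7,1,2,9) lw A(11)])
    have "exp (t - T) \<le> exp (- ln 2)" using that unfolding t1_def by simp
    then show "exp (t - T) \<le> 1/2" by (simp add: exp_minus)
    show "x t \<le> ln w / (16 * \<alpha>2)" using less[of t] that t10 unfolding L_def by simp
    show "0 \<le> \<alpha>1 + w * \<alpha>1 * exp (- ln w / 4) - ln w / (16 * \<alpha>2) / 2"
      using KK unfolding KK_def \<rho>_def L_def .
  qed
  define h where "h t = x t - KK * exp (t - T)" for t
  have "h 0 \<le> h t1"
  proof (rule DERIV_nonneg_imp_increasing_open[OF t10(1)])
    fix t assume t: "0 < t" "t < t1"
    have "(x has_real_derivative guided_field p1 pm1 w T t (x t)) (at t within {0..<T})"
      using A(14) t t10 by simp
    then have "(x has_real_derivative guided_field p1 pm1 w T t (x t)) (at t within {0<..<T})"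
      by (rule DERIV_subset) auto
    then have xd: "(x has_real_derivative guided_field p1 pm1 w T t (x t)) (at t)"
      using t t10 by (subst (asm) at_within_open) auto
    have "(h has_real_derivative guided_field p1 pm1 w T t (x t) - KK * exp (t - T)) (at t)"
      unfolding h_def[abs_def] by (rule derivative_eq_intros xd refl)+ simp
    moreover have "0 \<le> guided_field p1 pm1 w T t (x t) - KK * exp (t - T)"
      using fb[of t] t by (simp add: mult.commute)
    ultimately show "\<exists>y. (h has_real_derivative y) (at t) \<and> 0 \<le> y" by blast
  next
    have "continuous_on {0..<T} x"
      unfolding continuous_on_eq_continuous_within using A(14) DERIV_continuous by blast
    then have "continuous_on {0..t1} x" by (rule continuous_on_subset) (use t10 in auto)
    then show "continuous_on {0..t1} h" unfolding h_def[abs_def] by (intro continuous_intros)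
  qed
  moreover have "exp (t1 - T) = 1/2" unfolding t1_def by (simp add: exp_minus)
  moreover have "exp (0 - T) \<le> 1/4"
  proof -
    have "exp (- T) \<le> exp (- (2 * ln 2))" using A(10) by simp
    also have "exp (- (2 * ln 2)) = (1::real) / 4"
    proof -
      have "exp (2 * ln 2) = exp (ln 2 + ln (2::real))" by simp
      also have "\<dots> = 4" by (simp only: exp_add) simp
      finally show ?thesis by (simp add: exp_minus)
    qed
    finally show ?thesis by simp
  qed
  ultimately have "x 0 + KK / 4 \<le> x t1"
  proof -
    assume h: "h 0 \<le> h t1" and e: "exp (t1 - T) = 1/2" and f: "exp (0 - T) \<le> 1/4"
    have "KK * exp (0 - T) \<le> KK * (1/4)" using f KK by (rule mult_left_mono)
    then show ?thesis using h e unfolding h_def by simp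
  qed
  moreover have "- (S / 16) \<le> x 0"
  proof -
    have "S / (16 * \<beta>) = (S / \<beta>) / 16" by simp
    then have "S / (16 * \<beta>) \<le> S / 16" using Sb by simp
    then show ?thesis using A(15) unfolding S_def by linarith
  qed
  moreover have "KK / 4 = \<alpha>1 / 4 + (w * \<alpha>1 * \<rho>) / 4 - L / 8" unfolding KK_def by simp
  ultimately have "L \<le> x t1" using LS wS A(1) S0 by linarith
  then show False using less[of t1] t10 by simp
qed


end
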